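(* Let $\tau\in\mathcal{P}^\pm$, $\alpha,\beta\in\mathbb{R}$, and suppose $T_{\mathrm{ng}}=T_{\mathrm{ng}}(\tau;\alpha,\beta)$ is an exceptional Jacobi operator; let $T_{\mathrm{rg}}=T_{\mathrm{rg}}(\tau;\alpha,\beta)$ and $N=\deg\tau$. Every quasi-polynomial eigenfunction of $T_{\mathrm{rg}}$ has the form $\pi_k(x)=P_n(x)/\tau(x)$ with $k\in I_1(T_{\mathrm{rg}})$, $k=n-N$, where $P_n\in\mathcal{P}^\pm$ is an eigenpolynomial of $T_{\mathrm{ng}}$ of degree $n$. Moreover, if $\alpha,\beta\notin\mathbb{Z}_-$, then $I_1(T_{\mathrm{rg}})=I(T_{\mathrm{ng}})-N$ and $\sigma_{\mathcal{P}}(T_{\mathrm{ng}})=\sigma_1(T_{\mathrm{rg}})=\{k(k+\alpha+\beta+1):k\in I_1(T_{\mathrm{rg}})\}$.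
   Context: $D=d/dx$; $\mathcal{P}^\pm$ denotes the set of real polynomials not vanishing at $x=\pm1$; $\mathbb{Z}_-=\{-1,-2,\ldots\}$. $\eta(x;\alpha,\beta)=\frac{\alpha+1}{x-1}+\frac{\beta+1}{x+1}$; $T_{\mathrm{ng}}(\tau;\alpha,\beta)=(x^2-1)\big(D^2-2\frac{\tau'}{\tau}D+\frac{\tau''}{\tau}+\eta(D-\frac{\tau'}{\tau})\big)+2x\frac{\tau'}{\tau}$; $T_{\mathrm{rg}}(\tau;\alpha,\beta)=\tau^{-1}\circ T_{\mathrm{ng}}(\tau;\alpha,\beta)\circ\tau$. An eigenpolynomial of an operator $T$ is a nonzero polynomial $P$ with $TP=\lambda P$ for a constant $\lambda$; $\sigma_{\mathcal{P}}(T)$ is the set of such $\lambda$ and $I(T)$ the set of degrees of eigenpolynomials. $T_{\mathrm{ng}}$ is exceptional if $\mathbb{N}_0\setminus I(T_{\mathrm{ng}})$ is finite. A quasi-polynomial eigenfunction of $T$ is a rational solution $\pi$ of $T\pi=\lambda\pi$ with no zeros or poles at $x=\pm1$; its degree is the degree of the numerator minus that of the denominator; $I_1(T)$ is the set of such degrees and $\sigma_1(T)$ the set of corresponding eigenvalues. *)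

theory Defs
  imports "HOL-Analysis.Analysis" "HOL-Computational_Algebra.Polynomial"
begin

text \<open>Real functions; the operators are evaluated pointwise away from the
  singular points x = 1, x = -1 and the zeros of tau.\<close>

definition eta :: "real \<Rightarrow> real \<Rightarrow> real \<Rightarrow> real" where
  "eta \<alpha> \<beta> x = (\<alpha> + 1) / (x - 1) + (\<beta> + 1) / (x + 1)"

definition Tng :: "real poly \<Rightarrow> real \<Rightarrow> real \<Rightarrow> (real \<Rightarrow> real) \<Rightarrow> real \<Rightarrow> real" where
  "Tng \<tau> \<alpha> \<beta> f x =
     (let t = poly \<tau> x; t1 = poly (pderiv \<tau>) x; t2 = poly (pderiv (pderiv \<tau>)) x in
      (x^2 - 1) * (deriv (deriv f) x - 2 * (t1 / t) * deriv f x + (t2 / t) * f x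
                   + eta \<alpha> \<beta> x * (deriv f x - (t1 / t) * f x))
      + 2 * x * (t1 / t) * f x)"

definition Trg :: "real poly \<Rightarrow> real \<Rightarrow> real \<Rightarrow> (real \<Rightarrow> real) \<Rightarrow> real \<Rightarrow> real" where
  "Trg \<tau> \<alpha> \<beta> f x = Tng \<tau> \<alpha> \<beta> (\<lambda>y. poly \<tau> y * f y) x / poly \<tau> x"

definition Ppm :: "real poly set" where
  "Ppm = {P. poly P 1 \<noteq> 0 \<and> poly P (-1) \<noteq> 0}"

text \<open>Eigenpolynomial P of T_ng with eigenvalue lam: T_ng P = lam P as rational
  functions, i.e. pointwise off the finitely many singular points.\<close>
definition eigenpoly_ng :: "real poly \<Rightarrow> real \<Rightarrow> real \<Rightarrow> real poly \<Rightarrow> real \<Rightarrow> bool" where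
  "eigenpoly_ng \<tau> \<alpha> \<beta> P lam \<longleftrightarrow> P \<noteq> 0 \<and>
     (\<forall>x. x \<noteq> 1 \<and> x \<noteq> -1 \<and> poly \<tau> x \<noteq> 0 \<longrightarrow>
          Tng \<tau> \<alpha> \<beta> (poly P) x = lam * poly P x)"

definition sigmaP_ng :: "real poly \<Rightarrow> real \<Rightarrow> real \<Rightarrow> real set" where
  "sigmaP_ng \<tau> \<alpha> \<beta> = {lam. \<exists>P. eigenpoly_ng \<tau> \<alpha> \<beta> P lam}"

definition I_ng :: "real poly \<Rightarrow> real \<Rightarrow> real \<Rightarrow> nat set" where
  "I_ng \<tau> \<alpha> \<beta> = {degree P | P lam. eigenpoly_ng \<tau> \<alpha> \<beta> P lam}"

definition exceptional_ng :: "real poly \<Rightarrow> real \<Rightarrow> real \<Rightarrow> bool" where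
  "exceptional_ng \<tau> \<alpha> \<beta> \<longleftrightarrow> finite (UNIV - I_ng \<tau> \<alpha> \<beta>)"

text \<open>Quasi-polynomial eigenfunction p/q of T_rg with eigenvalue lam: a rational
  function with no zeros/poles at +-1 (p, q not vanishing at +-1), satisfying
  T_rg (p/q) = lam (p/q) as rational functions.\<close>
definition quasi_eig_rg :: "real poly \<Rightarrow> real \<Rightarrow> real \<Rightarrow> real poly \<Rightarrow> real poly \<Rightarrow> real \<Rightarrow> bool" where
  "quasi_eig_rg \<tau> \<alpha> \<beta> p q lam \<longleftrightarrow> p \<in> Ppm \<and> q \<in> Ppm \<and>
     (\<forall>x. x \<noteq> 1 \<and> x \<noteq> -1 \<and> poly \<tau> x \<noteq> 0 \<and> poly q x \<noteq> 0 \<longrightarrow>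
          Trg \<tau> \<alpha> \<beta> (\<lambda>y. poly p y / poly q y) x = lam * (poly p x / poly q x))"

definition I1_rg :: "real poly \<Rightarrow> real \<Rightarrow> real \<Rightarrow> int set" where
  "I1_rg \<tau> \<alpha> \<beta> = {int (degree p) - int (degree q) | p q lam. quasi_eig_rg \<tau> \<alpha> \<beta> p q lam}"

definition sigma1_rg :: "real poly \<Rightarrow> real \<Rightarrow> real \<Rightarrow> real set" where
  "sigma1_rg \<tau> \<alpha> \<beta> = {lam. \<exists>p q. quasi_eig_rg \<tau> \<alpha> \<beta> p q lam}"

end

theory Submission
  imports Defs "HOL-Computational_Algebra.Computational_Algebra" "HOL-Computational_Algebra.Field_as_Ring"
begin


definition Hp :: "'a::idom \<Rightarrow> 'a \<Rightarrow> 'a poly" where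
  "Hp a b = [:a+1:] * [:1,1:] + [:b+1:] * [:-1,1:]"

definition Lop :: "'a::idom poly \<Rightarrow> 'a \<Rightarrow> 'a \<Rightarrow> 'a \<Rightarrow> 'a poly \<Rightarrow> 'a poly \<Rightarrow> 'a poly" where
  "Lop t a b l N D = [:-1,0,1:] * (t * (pderiv (pderiv N) * D^2 - [:2:] * pderiv N * D * pderiv D
        - N * D * pderiv (pderiv D) + [:2:] * N * (pderiv D)^2)
      - [:2:] * pderiv t * (pderiv N * D - N * pderiv D) * D + pderiv (pderiv t) * N * D^2)
    + Hp a b * (t * (pderiv N * D - N * pderiv D) * D - pderiv t * N * D^2)
    + [:2:] * [:0,1:] * pderiv t * N * D^2 - [:l:] * t * N * D^2"

lemma zpow_deriv:
  fixes z :: "'a::idom poly"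
  assumes "pderiv z = 1"
  shows "z * pderiv (z^k) = [:of_nat k:] * z^k"
proof (cases k)
  case 0 then show ?thesis by simp
next
  case (Suc j)
  then show ?thesis using assms by (simp only: pderiv_power) (simp add: mult.commute)
qed

lemma zpow_deriv2:
  fixes z :: "'a::idom poly"
  assumes "pderiv z = 1"
  shows "z^2 * pderiv (pderiv (z^k)) = [:of_nat k * (of_nat k - 1):] * z^k"
proof -
  have "pderiv (z * pderiv (z^k)) = pderiv ([:of_nat k:] * z^k)"
    using zpow_deriv[OF assms] by simp
  hence "pderiv (z^k) + z * pderiv (pderiv (z^k)) = [:of_nat k:] * pderiv (z^k)"
    using assms by (simp add: pderiv_mult pderiv_add pderiv_smult add.commute)
  hence "z * pderiv (z^k) + z^2 * pderiv (pderiv (z^k)) = [:of_nat k:] * (z * pderiv (z^k))"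
    by (metis (no_types, lifting) distrib_left mult.assoc mult.left_commute power2_eq_square)
  hence "[:of_nat k:] * z^k + z^2 * pderiv (pderiv (z^k)) = [:of_nat k:] * ([:of_nat k:] * z^k)"
    using zpow_deriv[OF assms] by simp
  thus ?thesis by (simp add: algebra_simps smult_diff_left eq_diff_eq)
qed

lemma zfac:
  fixes z :: "'a::idom poly"
  assumes "pderiv z = 1" "F = z^k * G"
  shows "z * pderiv F = z^k * ([:of_nat k:] * G + z * pderiv G)"
    and "z^2 * pderiv (pderiv F) = z^k * ([:of_nat k * (of_nat k - 1):] * G
            + [:2 * of_nat k:] * (z * pderiv G) + z^2 * pderiv (pderiv G))"
proof -
  have d1: "z * pderiv (z^k) = [:of_nat k:] * z^k" by (rule zpow_deriv[OF assms(1)])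
  have d2: "z^2 * pderiv (pderiv (z^k)) = [:of_nat k * (of_nat k - 1):] * z^k" by (rule zpow_deriv2[OF assms(1)])
  have "z * pderiv F = (z * pderiv (z^k)) * G + z^k * (z * pderiv G)"
    using assms(2) by (simp add: pderiv_mult algebra_simps)
  then show "z * pderiv F = z^k * ([:of_nat k:] * G + z * pderiv G)"
    using d1 by (simp add: algebra_simps)
  have "z^2 * pderiv (pderiv F) = (z^2 * pderiv (pderiv (z^k))) * G + [:2:] * (z * pderiv (z^k)) * (z * pderiv G) + z^k * (z^2 * pderiv (pderiv G))"
    using assms(2) by (simp add: pderiv_mult pderiv_add pderiv_smult algebra_simps power2_eq_square numeral_poly)
  then show "z^2 * pderiv (pderiv F) = z^k * ([:of_nat k * (of_nat k - 1):] * G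
            + [:2 * of_nat k:] * (z * pderiv G) + z^2 * pderiv (pderiv G))"
    using d1 d2 by (simp add: algebra_simps)
qed

lemma alg:
  fixes z :: "'a::comm_ring_1"
  assumes h1: "z*B1 = zs*b1" and h2: "z^2*B2 = zs*b2" and h3: "B = zs*C" and h4: "t = zm*U"
    and h5: "z*T1 = zm*t1" and h6: "z^2*T2 = zm*t2"
  shows "z^2 * (Q*(t*(A2*B^2 - c2*A1*B*B1 - A*B*B2 + c2*A*B1^2) - c2*T1*(A1*B - A*B1)*B + T2*A*B^2)
     + H*(t*(A1*B - A*B1)*B - T1*A*B^2) + c2*X*T1*A*B^2 - L*t*A*B^2)
   = zm*zs*zs*(Q*(U*(z^2*A2*C^2 - c2*(z*A1)*C*b1 - A*C*b2 + c2*A*b1^2) - c2*t1*((z*A1)*C - A*b1)*C + t2*A*C^2)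
     + z*H*(U*((z*A1)*C - A*b1)*C - t1*A*C^2) + c2*X*z*t1*A*C^2 - L*z^2*U*A*C^2)"
proof -
  have "z^2 * (Q*(t*(A2*B^2 - c2*A1*B*B1 - A*B*B2 + c2*A*B1^2) - c2*T1*(A1*B - A*B1)*B + T2*A*B^2)
     + H*(t*(A1*B - A*B1)*B - T1*A*B^2) + c2*X*T1*A*B^2 - L*t*A*B^2)
   = (Q*(t*(z^2*A2*B^2 - c2*(z*A1)*B*(z*B1) - A*B*(z^2*B2) + c2*A*(z*B1)^2) - c2*(z*T1)*((z*A1)*B - A*(z*B1))*B + (z^2*T2)*A*B^2)
     + z*H*(t*((z*A1)*B - A*(z*B1))*B - (z*T1)*A*B^2) + c2*X*z*(z*T1)*A*B^2 - L*z^2*t*A*B^2)"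
    by (simp add: algebra_simps power2_eq_square)
  also have "\<dots> = zm*zs*zs*(Q*(U*(z^2*A2*C^2 - c2*(z*A1)*C*b1 - A*C*b2 + c2*A*b1^2) - c2*t1*((z*A1)*C - A*b1)*C + t2*A*C^2)
     + z*H*(U*((z*A1)*C - A*b1)*C - t1*A*C^2) + c2*X*z*t1*A*C^2 - L*z^2*U*A*C^2)"
    unfolding h1 h2 h5 h6 h3 h4 by (simp add: algebra_simps power2_eq_square)
  finally show ?thesis .
qed

lemma evalK:
  fixes x0 :: "'a::field_char_0"
  assumes z0: "poly z x0 = 0"
  shows "poly ([:-1,0,1:]*(U*(z^2*A2*C^2 - [:2:]*(z*A1)*C*b1 - A*C*b2 + [:2:]*A*b1^2) - [:2:]*t1*((z*A1)*C - A*b1)*C + t2*A*C^2)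
     + z*H*(U*((z*A1)*C - A*b1)*C - t1*A*C^2) + [:2:]*X*z*t1*A*C^2 - [:l:]*z^2*U*A*C^2) x0
   = (x0*x0 - 1) * (poly U x0 * (2 * poly A x0 * (poly b1 x0)^2 - poly A x0 * poly C x0 * poly b2 x0)
      + 2 * poly t1 x0 * poly A x0 * poly b1 x0 * poly C x0 + poly t2 x0 * poly A x0 * (poly C x0)^2)"
proof -
  have "poly ([:-1,0,1:]*(U*(z^2*A2*C^2 - [:2:]*(z*A1)*C*b1 - A*C*b2 + [:2:]*A*b1^2) - [:2:]*t1*((z*A1)*C - A*b1)*C + t2*A*C^2)
     + z*H*(U*((z*A1)*C - A*b1)*C - t1*A*C^2) + [:2:]*X*z*t1*A*C^2 - [:l:]*z^2*U*A*C^2) x0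
    = (x0*x0 - 1) * (poly U x0 * (0 - 0*poly C x0 * poly b1 x0 - poly A x0 * poly C x0 * poly b2 x0 + 2 * poly A x0 * (poly b1 x0)^2)
      - 2 * poly t1 x0 * (0 * poly C x0 - poly A x0 * poly b1 x0) * poly C x0 + poly t2 x0 * poly A x0 * (poly C x0)^2)
      + 0 + 0 - 0"
    by (simp only: poly_mult poly_add poly_diff poly_power poly_pCons poly_0 z0 power_zero_numeral mult_zero_left mult_zero_right mult_1_right add_0_right add_0_left mult.assoc) (simp add: algebra_simps)
  also have "\<dots> = (x0*x0 - 1) * (poly U x0 * (2 * poly A x0 * (poly b1 x0)^2 - poly A x0 * poly C x0 * poly b2 x0)
      + 2 * poly t1 x0 * poly A x0 * poly b1 x0 * poly C x0 + poly t2 x0 * poly A x0 * (poly C x0)^2)"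
    by (simp add: algebra_simps)
  finally show ?thesis .
qed

lemma ringK: fixes x0 :: "'a::field_char_0"
shows "(x0*x0 - 1) * (u * (2 * a * (S * c)^2 - a * c * (S * (S - 1) * c))
      + 2 * (M * u) * a * (S * c) * c + (M * (M - 1) * u) * a * c^2) = (x0^2 - 1) * u * a * c^2 *
      (S * S + S + 2 * M * S + M * (M - 1))"
  by (simp add: algebra_simps power2_eq_square)

lemma pole:
  fixes x0 :: "'a::field_char_0"
  assumes E: "Lop t a b l A B = 0"
    and B: "B = [:-x0,1:]^s * C" and s: "s \<ge> 1" and T: "t = [:-x0,1:]^m * U"
    and C0: "poly C x0 \<noteq> 0" and U0: "poly U x0 \<noteq> 0" and A0: "poly A x0 \<noteq> 0"
    and x0: "x0^2 \<noteq> 1"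
  shows False
proof -
  define z where "z = [:-x0,1:]"
  have pz: "pderiv z = 1" by (simp add: z_def pderiv_pCons)
  have z0: "poly z x0 = 0" by (simp add: z_def)
  have znz: "z \<noteq> 0" by (simp add: z_def)
  define b1 where "b1 = [:of_nat s:] * C + z * pderiv C"
  define b2 where "b2 = [:of_nat s * (of_nat s - 1):] * C + [:2 * of_nat s:] * (z * pderiv C) + z^2 * pderiv (pderiv C)"
  define t1 where "t1 = [:of_nat m:] * U + z * pderiv U"
  define t2 where "t2 = [:of_nat m * (of_nat m - 1):] * U + [:2 * of_nat m:] * (z * pderiv U) + z^2 * pderiv (pderiv U)"
  have Bz: "B = z^s * C" using B z_def by simp
  have Tz: "t = z^m * U" using T z_def by simp
  note hB = zfac[OF pz Bz] and hT = zfac[OF pz Tz]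
  define K where "K = [:-1,0,1:]*(U*(z^2*pderiv (pderiv A)*C^2 - [:2:]*(z*pderiv A)*C*b1 - A*C*b2 + [:2:]*A*b1^2) - [:2:]*t1*((z*pderiv A)*C - A*b1)*C + t2*A*C^2)
     + z*Hp a b*(U*((z*pderiv A)*C - A*b1)*C - t1*A*C^2) + [:2:]*[:0,1:]*z*t1*A*C^2 - [:l:]*z^2*U*A*C^2"
  have "z^2 * Lop t a b l A B = z^m*z^s*z^s*K"
    unfolding Lop_def K_def
    by (rule alg[OF hB(1)[folded b1_def] hB(2)[folded b2_def] Bz Tz hT(1)[folded t1_def] hT(2)[folded t2_def]])
  hence "z^m*z^s*z^s*K = 0" using E by simp
  hence K0: "K = 0" using znz by simp
  have pb1: "poly b1 x0 = of_nat s * poly C x0" unfolding b1_def using z0 by simp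
  have pb2: "poly b2 x0 = of_nat s * (of_nat s - 1) * poly C x0" unfolding b2_def using z0 by simp
  have pt1: "poly t1 x0 = of_nat m * poly U x0" unfolding t1_def using z0 by simp
  have pt2: "poly t2 x0 = of_nat m * (of_nat m - 1) * poly U x0" unfolding t2_def using z0 by simp
  have "poly K x0 = (x0*x0 - 1) * (poly U x0 * (2 * poly A x0 * (poly b1 x0)^2 - poly A x0 * poly C x0 * poly b2 x0)
      + 2 * poly t1 x0 * poly A x0 * poly b1 x0 * poly C x0 + poly t2 x0 * poly A x0 * (poly C x0)^2)"
    unfolding K_def by (rule evalK[OF z0])
  also have "\<dots> = (x0^2 - 1) * poly U x0 * poly A x0 * (poly C x0)^2 *
      (of_nat s * of_nat s + of_nat s + 2 * of_nat m * of_nat s + of_nat m * (of_nat m - 1))"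
    unfolding pb1 pb2 pt1 pt2 by (rule ringK)
  finally have "poly K x0 = (x0^2 - 1) * poly U x0 * poly A x0 * (poly C x0)^2 *
      (of_nat s * of_nat s + of_nat s + 2 * of_nat m * of_nat s + of_nat m * (of_nat m - 1))" .
  moreover have mm: "of_nat m * (of_nat m - 1) = (of_nat (m * (m - 1)) :: 'a)"
    by (cases m) (simp_all add: algebra_simps)
  moreover have "(of_nat s * of_nat s + of_nat s + 2 * of_nat m * of_nat s + of_nat (m * (m - 1)) :: 'a)
      = of_nat (s * s + s + 2 * m * s + m * (m - 1))"
    by simp
  moreover have "s * s + s + 2 * m * s + m * (m - 1) \<noteq> 0" using s by simp
  ultimately have "poly K x0 \<noteq> 0" using C0 U0 A0 x0
    by (simp del: of_nat_add of_nat_mult)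
  thus False using K0 by simp
qed


lemma alg2:
  fixes w :: "'a::comm_ring_1"
  assumes h1: "w*P1 = wr*g1" and h2: "w^2*P2 = wr*g2" and h3: "P = wr*G" and h4: "Q = w*Qc"
  shows "w * (Q*(t*(P2*1^2 - c2*P1*1*0 - P*1*0 + c2*P*0^2) - c2*T1*(P1*1 - P*0)*1 + T2*P*1^2)
     + H*(t*(P1*1 - P*0)*1 - T1*P*1^2) + c2*X*T1*P*1^2 - L*t*P*1^2)
   = wr*(Qc*(t*g2 - c2*w*T1*g1 + w^2*T2*G) + H*(t*g1 - w*T1*G) + w*(c2*X*T1*G - L*t*G))"
proof -
  have "w * (Q*(t*(P2*1^2 - c2*P1*1*0 - P*1*0 + c2*P*0^2) - c2*T1*(P1*1 - P*0)*1 + T2*P*1^2)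
     + H*(t*(P1*1 - P*0)*1 - T1*P*1^2) + c2*X*T1*P*1^2 - L*t*P*1^2)
   = Qc*(t*(w^2*P2) - c2*w*T1*(w*P1) + w^2*T2*P) + H*(t*(w*P1) - w*T1*P) + w*(c2*X*T1*P - L*t*P)"
    unfolding h4 by (simp add: algebra_simps power2_eq_square)
  also have "\<dots> = wr*(Qc*(t*g2 - c2*w*T1*g1 + w^2*T2*G) + H*(t*g1 - w*T1*G) + w*(c2*X*T1*G - L*t*G))"
    unfolding h1 h2 h3 by (simp add: algebra_simps power2_eq_square)
  finally show ?thesis .
qed

lemma evalK2:
  fixes c :: "'a::field_char_0"
  assumes w0: "poly w c = 0"
  shows "poly (Qc*(t*g2 - c2*w*T1*g1 + w^2*T2*G) + H*(t*g1 - w*T1*G) + w*(c2*X*T1*G - L*t*G)) c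
    = poly Qc c * poly t c * poly g2 c + poly H c * poly t c * poly g1 c"
  by (simp only: poly_mult poly_add poly_diff poly_power w0 power_zero_numeral mult_zero_left mult_zero_right
     add_0_right add_0_left diff_0_right mult.assoc)

lemma zero_at:
  fixes c :: "'a::field_char_0"
  assumes E: "Lop t a b l P 1 = 0"
    and P: "P = [:-c,1:]^r * G" and r: "r \<ge> 1"
    and G0: "poly G c \<noteq> 0" and t0: "poly t c \<noteq> 0" and c: "c^2 = 1"
  shows "of_nat r * (2 * c * (of_nat r - 1) + poly (Hp a b) c) = 0"
proof -
  define w where "w = [:-c,1:]"
  have pw: "pderiv w = 1" by (simp add: w_def pderiv_pCons)
  have w0: "poly w c = 0" by (simp add: w_def)
  have wnz: "w \<noteq> 0" by (simp add: w_def)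
  have Pw: "P = w^r * G" using P w_def by simp
  note hP = zfac[OF pw Pw]
  define g1 where "g1 = [:of_nat r:] * G + w * pderiv G"
  define g2 where "g2 = [:of_nat r * (of_nat r - 1):] * G + [:2 * of_nat r:] * (w * pderiv G) + w^2 * pderiv (pderiv G)"
  have Q: "[:-1,0,1:] = w * [:c,1:]" using c by (simp add: w_def power2_eq_square)
  define K where "K = [:c,1:]*(t*g2 - [:2:]*w*pderiv t*g1 + w^2*pderiv (pderiv t)*G) + Hp a b*(t*g1 - w*pderiv t*G)
     + w*([:2:]*[:0,1:]*pderiv t*G - [:l:]*t*G)"
  have "w * Lop t a b l P 1 = w^r * K"
    unfolding Lop_def K_def pderiv_1 pderiv_0
    by (rule alg2[OF hP(1)[folded g1_def] hP(2)[folded g2_def] Pw Q])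
  hence "K = 0" using E wnz by simp
  hence "poly K c = 0" by simp
  moreover have "poly K c = poly [:c,1:] c * poly t c * poly g2 c + poly (Hp a b) c * poly t c * poly g1 c"
    unfolding K_def by (rule evalK2[OF w0])
  moreover have "poly g1 c = of_nat r * poly G c" unfolding g1_def using w0 by simp
  moreover have "poly g2 c = of_nat r * (of_nat r - 1) * poly G c" unfolding g2_def using w0 by simp
  ultimately have "poly t c * poly G c * (of_nat r * (2 * c * (of_nat r - 1) + poly (Hp a b) c)) = 0"
    by (simp add: algebra_simps)
  thus ?thesis using G0 t0 by simp
qed


lemma Tng_alg:
  fixes x :: real
  assumes d: "d \<noteq> 0" and t: "t \<noteq> 0" and "x \<noteq> 1" "x \<noteq> -1"
    and "fx = n / d" "f1 = (n1 * d - n * d1) / d^2"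
    and "f2 = ((n2 * d - n * d2) * d^2 - (n1 * d - n * d1) * (2 * d * d1)) / (d^2)^2"
  shows "((x^2 - 1) * (f2 - 2 * (t1 / t) * f1 + (t2 / t) * fx
            + ((a + 1) / (x - 1) + (b + 1) / (x + 1)) * (f1 - (t1 / t) * fx))
          + 2 * x * (t1 / t) * fx) * t * d^3
   = (x^2 - 1) * (t * (n2 * d^2 - 2 * n1 * d * d1 - n * d * d2 + 2 * n * d1^2) - 2 * t1 * (n1 * d - n * d1) * d + t2 * n * d^2)
     + ((a + 1) * (x + 1) + (b + 1) * (x - 1)) * (t * (n1 * d - n * d1) * d - t1 * n * d^2) + 2 * x * t1 * n * d^2"
proof -
  have x1: "x - 1 \<noteq> 0" "x + 1 \<noteq> 0" using assms by auto
  have e: "(x^2 - 1) = (x - 1) * (x + 1)" by (simp add: algebra_simps power2_eq_square)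
  have E: "(x^2 - 1) * ((a + 1) / (x - 1) + (b + 1) / (x + 1)) = (a + 1) * (x + 1) + (b + 1) * (x - 1)"
  proof -
    have E1: "(x - 1) * (x + 1) * ((a + 1) / (x - 1)) = (a + 1) * (x + 1)" using x1 by (simp add: field_simps)
    have E2: "(x - 1) * (x + 1) * ((b + 1) / (x + 1)) = (b + 1) * (x - 1)" using x1 by (simp add: field_simps)
    show ?thesis unfolding e by (subst distrib_left) (simp only: E1 E2)
  qed
  have F0: "fx * d^3 = n * d^2" unfolding assms(5) using d by (simp add: power2_eq_square power3_eq_cube)
  have F1: "f1 * d^3 = (n1 * d - n * d1) * d" unfolding assms(6) using d by (simp add: power2_eq_square power3_eq_cube)
  have F2: "f2 * d^3 = n2 * d^2 - 2 * n1 * d * d1 - n * d * d2 + 2 * n * d1^2" unfolding assms(7) using d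
    by (simp add: power2_eq_square power3_eq_cube field_simps)
  have "((x^2 - 1) * (f2 - 2 * (t1 / t) * f1 + (t2 / t) * fx
            + ((a + 1) / (x - 1) + (b + 1) / (x + 1)) * (f1 - (t1 / t) * fx))
          + 2 * x * (t1 / t) * fx) * t * d^3
     = (x^2 - 1) * (t * (f2 * d^3) - 2 * t1 * (f1 * d^3) + t2 * (fx * d^3))
       + ((x^2 - 1) * ((a + 1) / (x - 1) + (b + 1) / (x + 1))) * (t * (f1 * d^3) - t1 * (fx * d^3))
       + 2 * x * t1 * (fx * d^3)"
    using t by (simp add: field_simps)
  also have "\<dots> = (x^2 - 1) * (t * (n2 * d^2 - 2 * n1 * d * d1 - n * d * d2 + 2 * n * d1^2) - 2 * t1 * ((n1 * d - n * d1) * d) + t2 * (n * d^2))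
     + ((a + 1) * (x + 1) + (b + 1) * (x - 1)) * (t * ((n1 * d - n * d1) * d) - t1 * (n * d^2)) + 2 * x * t1 * (n * d^2)"
    unfolding E F0 F1 F2 ..
  finally show ?thesis by (simp add: algebra_simps)
qed

lemma deriv_ratpoly:
  fixes N D :: "real poly"
  assumes "poly D y \<noteq> 0"
  shows "((\<lambda>y. poly N y / poly D y) has_real_derivative
           poly (pderiv N * D - N * pderiv D) y / (poly D y)^2) (at y)"
  using assms by (auto intro!: derivative_eq_intros simp: power2_eq_square algebra_simps)

lemma ev_nonzero:
  fixes D :: "real poly"
  assumes "poly D x \<noteq> 0"
  shows "eventually (\<lambda>y. poly D y \<noteq> 0) (nhds x)"
proof -
  have "open {y. poly D y \<noteq> 0}" by (rule open_Collect_neq) (auto intro: continuous_intros)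
  thus ?thesis using assms eventually_nhds_in_open by fastforce
qed

lemma Tng_rat:
  fixes x :: real
  assumes ev: "eventually (\<lambda>y. f y = poly N y / poly D y) (nhds x)"
    and D0: "poly D x \<noteq> 0" and t0: "poly t x \<noteq> 0" and x1: "x \<noteq> 1" and x2: "x \<noteq> -1"
  shows "Tng t a b f x * poly t x * (poly D x)^3 = poly (Lop t a b 0 N D) x"
proof -
  define M where "M = pderiv N * D - N * pderiv D"
  have ev2: "eventually (\<lambda>y. poly D y \<noteq> 0) (nhds x)" by (rule ev_nonzero[OF D0])
  have ev3: "eventually (\<lambda>y. eventually (\<lambda>y. f y = poly N y / poly D y) (nhds y)) (nhds x)"
    using ev by (simp add: eventually_eventually)
  have evd: "eventually (\<lambda>y. deriv f y = poly M y / poly (D^2) y) (nhds x)"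
    using ev2 ev3
  proof eventually_elim
    case (elim y)
    have "deriv f y = deriv (\<lambda>y. poly N y / poly D y) y" by (rule deriv_cong_ev[OF elim(2) refl])
    also have "\<dots> = poly M y / (poly D y)^2" unfolding M_def
      by (rule DERIV_imp_deriv[OF deriv_ratpoly[OF elim(1)]])
    finally show ?case by simp
  qed
  have fx: "f x = poly N x / poly D x" using ev by (rule eventually_nhds_x_imp_x)
  have f1: "deriv f x = poly M x / (poly D x)^2" using evd eventually_nhds_x_imp_x by fastforce
  have D20: "poly (D^2) x \<noteq> 0" using D0 by simp
  have f2: "deriv (deriv f) x = poly (pderiv M * D^2 - M * pderiv (D^2)) x / (poly (D^2) x)^2"
  proof -
    have "deriv (deriv f) x = deriv (\<lambda>y. poly M y / poly (D^2) y) x" by (rule deriv_cong_ev[OF evd refl])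
    also have "\<dots> = poly (pderiv M * D^2 - M * pderiv (D^2)) x / (poly (D^2) x)^2"
      by (rule DERIV_imp_deriv[OF deriv_ratpoly[OF D20]])
    finally show ?thesis .
  qed
  have pM: "pderiv M = pderiv (pderiv N) * D - N * pderiv (pderiv D)"
    unfolding M_def by (simp add: pderiv_mult pderiv_diff algebra_simps)
  have pD2: "pderiv (D^2) = [:2:] * D * pderiv D"
    by (simp add: pderiv_power numeral_poly)
  have f2': "deriv (deriv f) x = ((poly (pderiv (pderiv N)) x * poly D x - poly N x * poly (pderiv (pderiv D)) x) * (poly D x)^2
      - (poly (pderiv N) x * poly D x - poly N x * poly (pderiv D) x) * (2 * poly D x * poly (pderiv D) x)) / ((poly D x)^2)^2"
    unfolding f2 pM pD2 by (simp add: M_def)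
  have f1': "deriv f x = (poly (pderiv N) x * poly D x - poly N x * poly (pderiv D) x) / (poly D x)^2"
    unfolding f1 M_def by simp
  have "Tng t a b f x * poly t x * (poly D x)^3 =
     ((x^2 - 1) * (deriv (deriv f) x - 2 * (poly (pderiv t) x / poly t x) * deriv f x + (poly (pderiv (pderiv t)) x / poly t x) * f x
            + ((a + 1) / (x - 1) + (b + 1) / (x + 1)) * (deriv f x - (poly (pderiv t) x / poly t x) * f x))
          + 2 * x * (poly (pderiv t) x / poly t x) * f x) * poly t x * (poly D x)^3"
    by (simp add: Tng_def eta_def Let_def)
  also have "\<dots> = (x^2 - 1) * (poly t x * (poly (pderiv (pderiv N)) x * (poly D x)^2 - 2 * poly (pderiv N) x * poly D x * poly (pderiv D) x
       - poly N x * poly D x * poly (pderiv (pderiv D)) x + 2 * poly N x * (poly (pderiv D) x)^2)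
       - 2 * poly (pderiv t) x * (poly (pderiv N) x * poly D x - poly N x * poly (pderiv D) x) * poly D x
       + poly (pderiv (pderiv t)) x * poly N x * (poly D x)^2)
     + ((a + 1) * (x + 1) + (b + 1) * (x - 1)) * (poly t x * (poly (pderiv N) x * poly D x - poly N x * poly (pderiv D) x) * poly D x
       - poly (pderiv t) x * poly N x * (poly D x)^2) + 2 * x * poly (pderiv t) x * poly N x * (poly D x)^2"
    by (rule Tng_alg[OF D0 t0 x1 x2 fx f1' f2'])
  also have "\<dots> = poly (Lop t a b 0 N D) x"
    by (simp add: Lop_def Hp_def algebra_simps power2_eq_square)
  finally show ?thesis .
qed



lemma coeff_mult_le:
  fixes F G :: "'a::idom poly"
  assumes "degree F \<le> i" "degree G \<le> j"
  shows "coeff (F * G) (i + j) = coeff F i * coeff G j"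
proof (cases "degree F = i \<and> degree G = j")
  case True
  then show ?thesis using coeff_mult_degree_sum[of F G] by simp
next
  case False
  hence "degree F < i \<or> degree G < j" using assms by auto
  moreover have "degree (F * G) \<le> degree F + degree G" by (rule degree_mult_le)
  ultimately have "degree (F * G) < i + j" "coeff F i * coeff G j = 0"
    using assms by (auto simp: coeff_eq_0)
  thus ?thesis by (simp add: coeff_eq_0)
qed

lemma coeff_euler1:
  fixes P :: "'a::idom poly"
  shows "coeff ([:0,1:] * pderiv P) i = of_nat i * coeff P i"
  by (cases i) (simp_all add: coeff_pderiv)

lemma coeff_euler2:
  fixes P :: "'a::idom poly"
  shows "coeff ([:0,1:]^2 * pderiv (pderiv P)) i = of_nat i * (of_nat i - 1) * coeff P i"
proof -
  consider "i = 0" | "i = 1" | j where "i = Suc (Suc j)" by (metis One_nat_def not0_implies_Suc)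
  then show ?thesis
    by cases (simp_all add: coeff_pderiv power2_eq_square algebra_simps)
qed

lemma deg_euler1:
  fixes P :: "'a::idom poly"
  shows "degree ([:0,1:] * pderiv P) \<le> degree P"
  apply (rule degree_le) apply (intro allI impI) apply (subst coeff_euler1) by (simp add: coeff_eq_0)

lemma deg_euler2:
  fixes P :: "'a::idom poly"
  shows "degree ([:0,1:]^2 * pderiv (pderiv P)) \<le> degree P"
  apply (rule degree_le) apply (intro allI impI) apply (subst coeff_euler2) by (simp add: coeff_eq_0)

lemma coeff_pd_top:
  fixes P :: "'a::{idom,ring_char_0} poly"
  shows "coeff (pderiv P) (degree P) = 0" "degree (pderiv P) \<le> degree P"
    "coeff (pderiv (pderiv P)) (degree P) = 0" "degree (pderiv (pderiv P)) \<le> degree P"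
  by (auto simp: coeff_pderiv coeff_eq_0 degree_pderiv)

lemma ring_decomp:
  fixes X :: "'a::comm_ring_1"
  assumes "Q = X^2 - 1" "H = c1 + c2 * X"
  shows "Q*(t*(P2*1^2 - k2*P1*1*0 - P*1*0 + k2*P*0^2) - k2*T1*(P1*1 - P*0)*1 + T2*P*1^2)
     + H*(t*(P1*1 - P*0)*1 - T1*P*1^2) + k2*X*T1*P*1^2 - L*t*P*1^2
   = t * (X^2 * P2) - k2 * ((X * T1) * (X * P1)) + (X^2 * T2) * P + c2 * (t * (X * P1) - (X * T1) * P)
     + k2 * ((X * T1) * P) - L * (t * P) - (t * P2 - k2 * (T1 * P1) + T2 * P) + c1 * (t * P1 - T1 * P)"
  unfolding assms by (simp add: algebra_simps power2_eq_square)

lemma lop_decomp: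
  fixes t P :: "'a::idom poly"
  shows "Lop t a b l P 1 = t * ([:0,1:]^2 * pderiv (pderiv P)) - [:2:] * (([:0,1:] * pderiv t) * ([:0,1:] * pderiv P))
     + ([:0,1:]^2 * pderiv (pderiv t)) * P + [:a+b+2:] * (t * ([:0,1:] * pderiv P) - ([:0,1:] * pderiv t) * P)
     + [:2:] * (([:0,1:] * pderiv t) * P) - [:l:] * (t * P)
     - (t * pderiv (pderiv P) - [:2:] * (pderiv t * pderiv P) + pderiv (pderiv t) * P)
     + [:a-b:] * (t * pderiv P - pderiv t * P)"
proof -
  have Q: "[:-1,0,1:] = [:0,1:]^2 - (1::'a poly)" by (simp add: power2_eq_square one_pCons)
  have H: "Hp a b = [:a-b:] + [:a+b+2:] * [:0,1:]" by (simp add: Hp_def one_pCons algebra_simps)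
  show ?thesis unfolding Lop_def pderiv_1 pderiv_0 by (rule ring_decomp[OF Q H])
qed

lemma lead_eig:
  fixes t P :: "'a::field_char_0 poly"
  assumes E: "Lop t a b l P 1 = 0" and P0: "P \<noteq> 0" and t0: "t \<noteq> 0"
  shows "l = (of_nat (degree P) - of_nat (degree t)) * (of_nat (degree P) - of_nat (degree t) + a + b + 1)"
proof -
  define n where "n = degree P"
  define N where "N = degree t"
  define pn where "pn = coeff P n"
  define tN where "tN = coeff t N"
  have pn0: "pn \<noteq> 0" using P0 by (simp add: pn_def n_def)
  have tN0: "tN \<noteq> 0" using t0 by (simp add: tN_def N_def)
  have dP: "degree P \<le> n" and dt: "degree t \<le> N" by (simp_all add: n_def N_def)
  note cm = coeff_mult_le
  have cc: "\<And>c p i. coeff ([:c:] * p) i = c * coeff p i" by simp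
  have e1: "coeff t N = tN" "coeff P n = pn" by (simp_all add: tN_def pn_def)
  have "coeff (Lop t a b l P 1) (N + n) =
      tN * (of_nat n * (of_nat n - 1) * pn) - 2 * ((of_nat N * tN) * (of_nat n * pn))
     + (of_nat N * (of_nat N - 1) * tN) * pn + (a+b+2) * (tN * (of_nat n * pn) - (of_nat N * tN) * pn)
     + 2 * ((of_nat N * tN) * pn) - l * (tN * pn)
     - (tN * 0 - 2 * (0 * 0) + 0 * pn) + (a - b) * (tN * 0 - 0 * pn)"
    unfolding lop_decomp coeff_add coeff_diff cc
    unfolding cm[OF dt deg_euler2[of P, folded n_def]] cm[OF deg_euler1[of t, folded N_def] deg_euler1[of P, folded n_def]]
       cm[OF deg_euler2[of t, folded N_def] dP] cm[OF dt deg_euler1[of P, folded n_def]] cm[OF deg_euler1[of t, folded N_def] dP]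
       cm[OF dt dP] cm[OF dt coeff_pd_top(4)[of P, folded n_def]] cm[OF coeff_pd_top(2)[of t, folded N_def] coeff_pd_top(2)[of P, folded n_def]]
       cm[OF coeff_pd_top(4)[of t, folded N_def] dP] cm[OF dt coeff_pd_top(2)[of P, folded n_def]] cm[OF coeff_pd_top(2)[of t, folded N_def] dP]
       coeff_euler1 coeff_euler2 e1 coeff_pd_top(1)[of P, folded n_def] coeff_pd_top(3)[of P, folded n_def]
       coeff_pd_top(1)[of t, folded N_def] coeff_pd_top(3)[of t, folded N_def]
    ..
  also have "\<dots> = tN * pn * ((of_nat n - of_nat N) * (of_nat n - of_nat N + a + b + 1) - l)"
    by algebra
  finally have "tN * pn * ((of_nat n - of_nat N) * (of_nat n - of_nat N + a + b + 1) - l) = 0"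
    using E by simp
  thus ?thesis using tN0 pn0 by (simp add: n_def N_def)
qed


abbreviation cp :: "real poly \<Rightarrow> complex poly" where "cp \<equiv> map_poly of_real"

lemma cp_add: "cp (p + q) = cp p + cp q" by (rule poly_eqI) (simp add: coeff_map_poly)
lemma cp_diff: "cp (p - q) = cp p - cp q" by (rule poly_eqI) (simp add: coeff_map_poly)
lemma cp_mult: "cp (p * q) = cp p * cp q"
  by (rule poly_eqI) (simp add: coeff_map_poly coeff_mult of_real_sum)
lemma cp_pderiv: "cp (pderiv p) = pderiv (cp p)"
  by (rule poly_eqI) (simp add: coeff_map_poly coeff_pderiv)
lemma cp_power: "cp (p ^ n) = cp p ^ n" by (induction n) (simp_all add: cp_mult)
lemma cp_pCons: "cp (pCons c p) = pCons (of_real c) (cp p)" by (simp add: map_poly_pCons)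
lemma cp_one: "cp 1 = 1" by simp
lemma cp_poly: "poly (cp p) (of_real x) = of_real (poly p x)"
  by (induction p) (auto simp: map_poly_pCons)

lemma cp_Lop: "cp (Lop t a b l N D) = Lop (cp t) (of_real a) (of_real b) (of_real l) (cp N) (cp D)"
  unfolding Lop_def Hp_def
  by (simp only: cp_add cp_diff cp_mult cp_pderiv cp_power cp_pCons map_poly_0 of_real_add of_real_1
     of_real_0 of_real_minus of_real_numeral of_real_diff)

lemma cofinite_zero:
  fixes p :: "real poly"
  assumes "finite S" "\<And>x. x \<notin> S \<Longrightarrow> poly p x = 0"
  shows "p = 0"
proof (rule ccontr)
  assume "p \<noteq> 0"
  hence "finite {x. poly p x = 0}" by (rule poly_roots_finite)
  hence "finite (S \<union> {x. poly p x = 0})" using assms(1) by simp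
  moreover have "S \<union> {x. poly p x = 0} = UNIV" using assms(2) by auto
  ultimately show False by (metis infinite_UNIV_char_0)
qed

lemma Lop_lam: "Lop t a b l N D = Lop t a b 0 N D - [:l:] * t * N * D^2"
  by (simp add: Lop_def)


lemma tng_poly:
  fixes x :: real
  assumes "poly t x \<noteq> 0" "x \<noteq> 1" "x \<noteq> -1"
  shows "Tng t a b (poly P) x * poly t x = poly (Lop t a b 0 P 1) x"
proof -
  have ev: "eventually (\<lambda>y. poly P y = poly P y / poly 1 y) (nhds x)" by simp
  have d: "poly (1::real poly) x \<noteq> 0" by simp
  show ?thesis using Tng_rat[OF ev d assms, of a b] by simp
qed

lemma eig_iff:
  assumes t0: "t \<noteq> 0"
  shows "eigenpoly_ng t a b P l \<longleftrightarrow> P \<noteq> 0 \<and> Lop t a b l P 1 = 0"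
proof -
  have key: "poly (Lop t a b l P 1) x = poly t x * (Tng t a b (poly P) x - l * poly P x)"
    if "poly t x \<noteq> 0" "x \<noteq> 1" "x \<noteq> -1" for x
    using tng_poly[OF that, of a b P] by (simp add: Lop_lam[of t a b l P 1] algebra_simps)
  show ?thesis
  proof
    assume e: "eigenpoly_ng t a b P l"
    have "Lop t a b l P 1 = 0"
    proof (rule cofinite_zero[of "{1,-1} \<union> {x. poly t x = 0}"])
      show "finite ({1,-1} \<union> {x. poly t x = 0})" using poly_roots_finite[OF t0] by simp
      fix x assume "x \<notin> {1,-1} \<union> {x. poly t x = 0}"
      hence x: "poly t x \<noteq> 0" "x \<noteq> 1" "x \<noteq> -1" by auto
      thus "poly (Lop t a b l P 1) x = 0" using key[OF x] e by (simp add: eigenpoly_ng_def)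
    qed
    thus "P \<noteq> 0 \<and> Lop t a b l P 1 = 0" using e by (simp add: eigenpoly_ng_def)
  next
    assume h: "P \<noteq> 0 \<and> Lop t a b l P 1 = 0"
    show "eigenpoly_ng t a b P l" unfolding eigenpoly_ng_def
    proof (intro conjI allI impI)
      show "P \<noteq> 0" using h by simp
      fix x assume x: "x \<noteq> 1 \<and> x \<noteq> -1 \<and> poly t x \<noteq> 0"
      hence "poly t x * (Tng t a b (poly P) x - l * poly P x) = 0" using key[of x] h by simp
      thus "Tng t a b (poly P) x = l * poly P x" using x by simp
    qed
  qed
qed

lemma eig_Ppm:
  assumes t: "t \<in> Ppm" and e: "eigenpoly_ng t a b P l"
    and ab: "\<forall>m::int. m < 0 \<longrightarrow> a \<noteq> of_int m \<and> b \<noteq> of_int m"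
  shows "P \<in> Ppm"
proof -
  have t0: "t \<noteq> 0" using t by (auto simp: Ppm_def)
  from e[unfolded eig_iff[OF t0]] have P0: "P \<noteq> 0" and E: "Lop t a b l P 1 = 0" by auto
  have "poly P c \<noteq> 0" if c: "c = 1 \<or> c = -1" for c
  proof
    assume Pc: "poly P c = 0"
    define r where "r = order c P"
    obtain G where PG: "P = [:-c,1:]^r * G" and nd: "\<not> [:-c,1:] dvd G"
      using order_decomp[OF P0, of c] r_def by blast
    have G0: "poly G c \<noteq> 0" using nd by (simp add: poly_eq_0_iff_dvd)
    have r1: "r \<ge> 1" using Pc P0 order_root[of P c] r_def by simp
    have tc: "poly t c \<noteq> 0" using t c by (auto simp: Ppm_def)
    have "of_nat r * (2 * c * (of_nat r - 1) + poly (Hp a b) c) = 0"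
      by (rule zero_at[OF E PG r1 G0 tc]) (use c in auto)
    moreover have "r > 0" using r1 by simp
    ultimately have h: "2 * c * (of_nat r - 1) + poly (Hp a b) c = 0" by simp
    show False using c
    proof
      assume "c = 1"
      hence "a = of_int (- int r)" using h by (simp add: Hp_def algebra_simps)
      thus False using ab r1 by (metis neg_less_0_iff_less of_nat_0_less_iff zero_less_one less_le_trans of_nat_1 r1 le_less_trans int_one_le_iff_zero_less linorder_not_le)
    next
      assume "c = -1"
      hence "b = of_int (- int r)" using h by (simp add: Hp_def algebra_simps)
      thus False using ab r1 by (metis neg_less_0_iff_less of_nat_0_less_iff zero_less_one less_le_trans of_nat_1 r1 le_less_trans int_one_le_iff_zero_less linorder_not_le)
    qed
  qed
  thus ?thesis by (simp add: Ppm_def)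
qed


lemma B_const:
  fixes A B t :: "real poly"
  assumes E: "Lop t a b l A B = 0" and cop: "coprime A B" and t0: "t \<noteq> 0"
    and B0: "B \<noteq> 0" and B1: "poly B 1 \<noteq> 0" and B2: "poly B (-1) \<noteq> 0"
  shows "degree B = 0"
proof (rule ccontr)
  assume dB: "degree B \<noteq> 0"
  have dBc: "degree (cp B) = degree B" by (rule degree_map_poly) simp
  hence "\<not> constant (poly (cp B))" using dB constant_degree by metis
  then obtain x0 where x0: "poly (cp B) x0 = 0" using fundamental_theorem_of_algebra by blast
  have Bc0: "cp B \<noteq> 0" using dB dBc by auto
  have "x0 \<noteq> 1" using x0 cp_poly[of B 1] B1 by auto
  moreover have "x0 \<noteq> -1" using x0 cp_poly[of B "-1"] B2 by auto
  ultimately have x0sq: "x0^2 \<noteq> 1" by (simp add: power2_eq_1_iff)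
  define s where "s = order x0 (cp B)"
  obtain C where BC: "cp B = [:-x0,1:]^s * C" and ndC: "\<not> [:-x0,1:] dvd C"
    using order_decomp[OF Bc0, of x0] s_def by blast
  have C0: "poly C x0 \<noteq> 0" using ndC by (simp add: poly_eq_0_iff_dvd)
  have s1: "s \<ge> 1" using x0 Bc0 order_root[of "cp B" x0] s_def by simp
  have tc0: "cp t \<noteq> 0"
  proof
    assume "cp t = 0"
    hence "coeff (cp t) i = 0" for i by simp
    hence "coeff t i = 0" for i by (simp add: coeff_map_poly)
    thus False using t0 by (simp add: poly_eq_iff)
  qed
  define m where "m = order x0 (cp t)"
  obtain U where tU: "cp t = [:-x0,1:]^m * U" and ndU: "\<not> [:-x0,1:] dvd U"
    using order_decomp[OF tc0, of x0] m_def by blast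
  have U0: "poly U x0 \<noteq> 0" using ndU by (simp add: poly_eq_0_iff_dvd)
  define u where "u = fst (bezout_coefficients A B)"
  define v where "v = snd (bezout_coefficients A B)"
  have "u * A + v * B = 1" using bezout_coefficients_fst_snd[of A B] cop unfolding u_def v_def by simp
  hence "cp (u * A + v * B) = 1" by simp
  hence "cp u * cp A + cp v * cp B = 1" by (simp only: cp_add cp_mult)
  hence "poly (cp u) x0 * poly (cp A) x0 + poly (cp v) x0 * poly (cp B) x0 = 1"
    by (metis poly_1 poly_add poly_mult)
  hence A0: "poly (cp A) x0 \<noteq> 0" using x0 by auto
  have "Lop (cp t) (of_real a) (of_real b) (of_real l) (cp A) (cp B) = 0"
    using E cp_Lop[of t a b l A B] by simp
  from pole[OF this BC s1 tU C0 U0 A0 x0sq] show False .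
qed


lemma Trg_Tng:
  fixes x :: real
  assumes "poly t x \<noteq> 0"
  shows "Trg t a b f x = Tng t a b (\<lambda>y. poly t y * f y) x / poly t x"
  by (simp add: Trg_def)

lemma quasi_to_eig:
  assumes t: "t \<in> Ppm" and Q: "quasi_eig_rg t a b p q l"
  shows "\<exists>P. P \<in> Ppm \<and> eigenpoly_ng t a b P l \<and> p * t = P * q \<and>
           int (degree p) - int (degree q) = int (degree P) - int (degree t)"
proof -
  have pP: "p \<in> Ppm" and qP: "q \<in> Ppm" using Q by (auto simp: quasi_eig_rg_def)
  have t0: "t \<noteq> 0" using t by (auto simp: Ppm_def)
  have p0: "p \<noteq> 0" using pP by (auto simp: Ppm_def)
  have q0: "q \<noteq> 0" using qP by (auto simp: Ppm_def)
  define N0 where "N0 = t * p"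
  have N00: "N0 \<noteq> 0" using t0 p0 by (simp add: N0_def)
  define g where "g = gcd N0 q"
  have g0: "g \<noteq> 0" using q0 by (simp add: g_def)
  define A where "A = N0 div g"
  define B where "B = q div g"
  have NA: "N0 = A * g" unfolding A_def g_def by simp
  have qB: "q = B * g" unfolding B_def g_def by simp
  have cop: "coprime A B" unfolding A_def B_def g_def by (rule div_gcd_coprime) (use q0 in simp)
  have B0: "B \<noteq> 0" using q0 qB by auto
  have A0: "A \<noteq> 0" using N00 NA by auto
  have Bpm: "poly B 1 \<noteq> 0" "poly B (-1) \<noteq> 0" using qP qB by (auto simp: Ppm_def)
  have tpA: "poly t c * poly p c = poly A c * poly g c" for c
    using NA unfolding N0_def by (metis poly_mult)
  have Apm: "poly A 1 \<noteq> 0" "poly A (-1) \<noteq> 0" using pP t tpA[of 1] tpA[of "-1"] by (auto simp: Ppm_def)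
  let ?S = "{1,-1} \<union> {x. poly t x = 0} \<union> {x. poly q x = 0}"
  have Sfin: "finite ?S" using poly_roots_finite[OF t0] poly_roots_finite[OF q0] by simp
  have E: "Lop t a b l A B = 0"
  proof (rule cofinite_zero[OF Sfin])
    fix x assume "x \<notin> ?S"
    hence x: "x \<noteq> 1" "x \<noteq> -1" "poly t x \<noteq> 0" "poly q x \<noteq> 0" by auto
    have Bx: "poly B x \<noteq> 0" using x(4) qB by auto
    have ev: "eventually (\<lambda>y. poly t y * (poly p y / poly q y) = poly A y / poly B y) (nhds x)"
      using ev_nonzero[OF x(4)]
    proof eventually_elim
      case (elim y)
      have gy: "poly g y \<noteq> 0" using elim qB by auto
      have "poly t y * (poly p y / poly q y) = poly N0 y / poly q y" by (simp add: N0_def)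
      also have "\<dots> = poly A y / poly B y" unfolding NA qB using gy by simp
      finally show ?case .
    qed
    have T1: "Tng t a b (\<lambda>y. poly t y * (poly p y / poly q y)) x * poly t x * (poly B x)^3 = poly (Lop t a b 0 A B) x"
      by (rule Tng_rat[OF ev Bx x(3) x(1) x(2)])
    have "Trg t a b (\<lambda>y. poly p y / poly q y) x = l * (poly p x / poly q x)"
      using Q x by (auto simp: quasi_eig_rg_def)
    hence "Tng t a b (\<lambda>y. poly t y * (poly p y / poly q y)) x = l * (poly t x * (poly p x / poly q x))"
      using x(3) by (simp add: Trg_def field_simps)
    also have "poly t x * (poly p x / poly q x) = poly A x / poly B x"
      using eventually_nhds_x_imp_x[OF ev] .
    finally have "Tng t a b (\<lambda>y. poly t y * (poly p y / poly q y)) x = l * (poly A x / poly B x)" .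
    hence "poly (Lop t a b 0 A B) x = l * (poly A x / poly B x) * poly t x * (poly B x)^3"
      using T1 by simp
    hence "poly (Lop t a b 0 A B) x = l * poly t x * poly A x * (poly B x)^2"
      using Bx by (simp add: field_simps power2_eq_square power3_eq_cube)
    thus "poly (Lop t a b l A B) x = 0"
      by (simp add: Lop_lam[of t a b l A B])
  qed
  have dB: "degree B = 0" by (rule B_const[OF E cop t0 B0 Bpm])
  define b0 where "b0 = coeff B 0"
  have Bc: "B = [:b0:]" using degree_0_id[OF dB] by (simp add: b0_def)
  have b00: "b0 \<noteq> 0" using B0 Bc by auto
  define P where "P = smult (inverse b0) A"
  have PA: "poly P y = poly A y / poly B y" for y by (simp add: P_def Bc field_simps)
  have P0: "P \<noteq> 0" using A0 b00 by (simp add: P_def)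
  have Pq: "p * t = P * q"
  proof -
    have "P * q = smult (inverse b0 * b0) (A * g)" by (simp add: P_def qB Bc mult_ac)
    also have "\<dots> = t * p" using b00 NA N0_def by simp
    finally show ?thesis by (simp add: mult.commute)
  qed
  have PP: "P \<in> Ppm" using Apm b00 by (simp add: Ppm_def P_def)
  have eig: "eigenpoly_ng t a b P l" unfolding eigenpoly_ng_def
  proof (intro conjI allI impI)
    show "P \<noteq> 0" by (rule P0)
    fix x assume x: "x \<noteq> 1 \<and> x \<noteq> -1 \<and> poly t x \<noteq> 0"
    have ev: "eventually (\<lambda>y. poly P y = poly A y / poly B y) (nhds x)" using PA by simp
    have Bx: "poly B x \<noteq> 0" using Bc b00 by simp
    have T1: "Tng t a b (poly P) x * poly t x * (poly B x)^3 = poly (Lop t a b 0 A B) x"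
      using Tng_rat[OF ev Bx] x by blast
    have "poly (Lop t a b l A B) x = 0" using E by simp
    hence "poly (Lop t a b 0 A B) x = l * poly t x * poly A x * (poly B x)^2"
      by (simp add: Lop_lam[of t a b l A B])
    hence "Tng t a b (poly P) x * poly t x * (poly B x)^3 = l * poly t x * poly A x * (poly B x)^2"
      using T1 by simp
    hence "Tng t a b (poly P) x * (poly t x * (poly B x)^3) = (l * (poly A x / poly B x)) * (poly t x * (poly B x)^3)"
      using Bx by (simp add: field_simps power2_eq_square power3_eq_cube)
    moreover have c0: "poly t x * (poly B x)^3 \<noteq> 0" using Bx x by simp
    ultimately have "Tng t a b (poly P) x = l * (poly A x / poly B x)" using mult_right_cancel[OF c0] by blast
    thus "Tng t a b (poly P) x = l * poly P x" using PA by simp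
  qed
  have dP: "degree P = degree A" using b00 by (simp add: P_def)
  have "degree t + degree p = degree A + degree g"
    using NA N0_def t0 p0 A0 g0 by (metis degree_mult_eq)
  moreover have "degree q = degree g" using qB B0 g0 dB by (simp add: degree_mult_eq)
  ultimately have "int (degree p) - int (degree q) = int (degree P) - int (degree t)"
    using dP by simp
  thus ?thesis using PP eig Pq by blast
qed


lemma eig_to_quasi:
  assumes t: "t \<in> Ppm" and e: "eigenpoly_ng t a b P l" and PP: "P \<in> Ppm"
  shows "quasi_eig_rg t a b P t l"
proof -
  have t0: "t \<noteq> 0" using t by (auto simp: Ppm_def)
  have E: "Lop t a b l P 1 = 0" using e eig_iff[OF t0] by blast
  show ?thesis unfolding quasi_eig_rg_def
  proof (intro conjI allI impI)
    show "P \<in> Ppm" "t \<in> Ppm" using PP t by auto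
    fix x assume x: "x \<noteq> 1 \<and> x \<noteq> -1 \<and> poly t x \<noteq> 0 \<and> poly t x \<noteq> 0"
    have ev: "eventually (\<lambda>y. poly t y * (poly P y / poly t y) = poly P y / poly 1 y) (nhds x)"
      using ev_nonzero[of t x] x by (auto elim: eventually_mono)
    have d: "poly (1::real poly) x \<noteq> 0" by simp
    have T1: "Tng t a b (\<lambda>y. poly t y * (poly P y / poly t y)) x * poly t x * (poly 1 x)^3 = poly (Lop t a b 0 P 1) x"
      using Tng_rat[OF ev d] x by blast
    have "poly (Lop t a b l P 1) x = 0" using E by simp
    hence "poly (Lop t a b 0 P 1) x = l * poly t x * poly P x"
      by (simp add: Lop_lam[of t a b l P 1])
    hence "Tng t a b (\<lambda>y. poly t y * (poly P y / poly t y)) x * poly t x = (l * poly P x) * poly t x"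
      using T1 by simp
    hence "Tng t a b (\<lambda>y. poly t y * (poly P y / poly t y)) x = l * poly P x" using x by simp
    thus "Trg t a b (\<lambda>y. poly P y / poly t y) x = l * (poly P x / poly t x)"
      by (simp add: Trg_def)
  qed
qed

lemma eig_val:
  assumes t: "t \<in> Ppm" and e: "eigenpoly_ng t a b P l"
  shows "l = (real (degree P) - real (degree t)) * (real (degree P) - real (degree t) + a + b + 1)"
proof -
  have t0: "t \<noteq> 0" using t by (auto simp: Ppm_def)
  have "P \<noteq> 0" "Lop t a b l P 1 = 0" using e eig_iff[OF t0] by blast+
  from lead_eig[OF this(2) this(1) t0] show ?thesis by simp
qed

theorem mainTheorem5:
  fixes \<tau> :: "real poly" and \<alpha> \<beta> :: real
  assumes tau: "\<tau> \<in> Ppm"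
    and exc: "exceptional_ng \<tau> \<alpha> \<beta>"
  shows "(\<forall>p q lam. quasi_eig_rg \<tau> \<alpha> \<beta> p q lam \<longrightarrow>
            (\<exists>P. P \<in> Ppm \<and> eigenpoly_ng \<tau> \<alpha> \<beta> P lam \<and> p * \<tau> = P * q \<and>
                 int (degree p) - int (degree q) \<in> I1_rg \<tau> \<alpha> \<beta> \<and>
                 int (degree p) - int (degree q) = int (degree P) - int (degree \<tau>)))
       \<and> ((\<forall>m::int. m < 0 \<longrightarrow> \<alpha> \<noteq> of_int m \<and> \<beta> \<noteq> of_int m) \<longrightarrow>
            I1_rg \<tau> \<alpha> \<beta> = {int n - int (degree \<tau>) | n. n \<in> I_ng \<tau> \<alpha> \<beta>}
          \<and> sigmaP_ng \<tau> \<alpha> \<beta> = sigma1_rg \<tau> \<alpha> \<beta>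
          \<and> sigma1_rg \<tau> \<alpha> \<beta> = {of_int k * (of_int k + \<alpha> + \<beta> + 1) | k. k \<in> I1_rg \<tau> \<alpha> \<beta>})"
proof (intro conjI impI allI)
  fix p q lam
  assume Q: "quasi_eig_rg \<tau> \<alpha> \<beta> p q lam"
  have mem: "int (degree p) - int (degree q) \<in> I1_rg \<tau> \<alpha> \<beta>" using Q unfolding I1_rg_def by blast
  from quasi_to_eig[OF tau Q] mem
  show "\<exists>P. P \<in> Ppm \<and> eigenpoly_ng \<tau> \<alpha> \<beta> P lam \<and> p * \<tau> = P * q \<and>
                 int (degree p) - int (degree q) \<in> I1_rg \<tau> \<alpha> \<beta> \<and>
                 int (degree p) - int (degree q) = int (degree P) - int (degree \<tau>)" by blast
next
  assume ab: "\<forall>m::int. m < 0 \<longrightarrow> \<alpha> \<noteq> of_int m \<and> \<beta> \<noteq> of_int m"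
  have qe: "quasi_eig_rg \<tau> \<alpha> \<beta> P \<tau> l" if "eigenpoly_ng \<tau> \<alpha> \<beta> P l" for P l
    using eig_to_quasi[OF tau that eig_Ppm[OF tau that ab]] .
  show "I1_rg \<tau> \<alpha> \<beta> = {int n - int (degree \<tau>) | n. n \<in> I_ng \<tau> \<alpha> \<beta>}"
  proof (intro set_eqI iffI)
    fix k assume "k \<in> I1_rg \<tau> \<alpha> \<beta>"
    then obtain p q l where k: "k = int (degree p) - int (degree q)" and Q: "quasi_eig_rg \<tau> \<alpha> \<beta> p q l"
      unfolding I1_rg_def by blast
    from quasi_to_eig[OF tau Q] obtain P where "eigenpoly_ng \<tau> \<alpha> \<beta> P l"
      "int (degree p) - int (degree q) = int (degree P) - int (degree \<tau>)" by blast
    thus "k \<in> {int n - int (degree \<tau>) | n. n \<in> I_ng \<tau> \<alpha> \<beta>}" unfolding I_ng_def k by blast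
  next
    fix k assume "k \<in> {int n - int (degree \<tau>) | n. n \<in> I_ng \<tau> \<alpha> \<beta>}"
    then obtain P l where k: "k = int (degree P) - int (degree \<tau>)" and e: "eigenpoly_ng \<tau> \<alpha> \<beta> P l"
      unfolding I_ng_def by blast
    show "k \<in> I1_rg \<tau> \<alpha> \<beta>" using qe[OF e] k unfolding I1_rg_def by blast
  qed
  show "sigmaP_ng \<tau> \<alpha> \<beta> = sigma1_rg \<tau> \<alpha> \<beta>"
  proof (intro set_eqI iffI)
    fix l assume "l \<in> sigmaP_ng \<tau> \<alpha> \<beta>"
    then obtain P where "eigenpoly_ng \<tau> \<alpha> \<beta> P l" unfolding sigmaP_ng_def by blast
    thus "l \<in> sigma1_rg \<tau> \<alpha> \<beta>" using qe unfolding sigma1_rg_def by blast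
  next
    fix l assume "l \<in> sigma1_rg \<tau> \<alpha> \<beta>"
    then obtain p q where "quasi_eig_rg \<tau> \<alpha> \<beta> p q l" unfolding sigma1_rg_def by blast
    from quasi_to_eig[OF tau this] show "l \<in> sigmaP_ng \<tau> \<alpha> \<beta>" unfolding sigmaP_ng_def by blast
  qed
  show "sigma1_rg \<tau> \<alpha> \<beta> = {of_int k * (of_int k + \<alpha> + \<beta> + 1) | k. k \<in> I1_rg \<tau> \<alpha> \<beta>}"
  proof (intro set_eqI iffI)
    fix l assume "l \<in> sigma1_rg \<tau> \<alpha> \<beta>"
    then obtain p q where Q: "quasi_eig_rg \<tau> \<alpha> \<beta> p q l" unfolding sigma1_rg_def by blast
    define k where "k = int (degree p) - int (degree q)"
    have kI: "k \<in> I1_rg \<tau> \<alpha> \<beta>" using Q unfolding I1_rg_def k_def by blast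
    from quasi_to_eig[OF tau Q] obtain P where e: "eigenpoly_ng \<tau> \<alpha> \<beta> P l"
      and kP: "k = int (degree P) - int (degree \<tau>)" unfolding k_def by blast
    have "of_int k = real (degree P) - real (degree \<tau>)" using kP by simp
    hence "l = of_int k * (of_int k + \<alpha> + \<beta> + 1)" using eig_val[OF tau e] by simp
    thus "l \<in> {of_int k * (of_int k + \<alpha> + \<beta> + 1) | k. k \<in> I1_rg \<tau> \<alpha> \<beta>}" using kI by blast
  next
    fix l assume "l \<in> {of_int k * (of_int k + \<alpha> + \<beta> + 1) | k. k \<in> I1_rg \<tau> \<alpha> \<beta>}"
    then obtain k where l: "l = of_int k * (of_int k + \<alpha> + \<beta> + 1)" and kI: "k \<in> I1_rg \<tau> \<alpha> \<beta>" by blast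
    from kI obtain p q l' where k: "k = int (degree p) - int (degree q)" and Q: "quasi_eig_rg \<tau> \<alpha> \<beta> p q l'"
      unfolding I1_rg_def by blast
    from quasi_to_eig[OF tau Q] obtain P where e: "eigenpoly_ng \<tau> \<alpha> \<beta> P l'"
      and kP: "k = int (degree P) - int (degree \<tau>)" unfolding k by blast
    have "of_int k = real (degree P) - real (degree \<tau>)" using kP by simp
    hence "l' = l" using eig_val[OF tau e] l by simp
    thus "l \<in> sigma1_rg \<tau> \<alpha> \<beta>" using Q unfolding sigma1_rg_def by blast
  qed
qed


end
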